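(* Assume Gompertzian growth, $\phi(x)=b\ln(X_\infty/x)$ with $b>0$ and $X_\infty>0$, and let $x(t)=X_0^{e^{-bt}}X_\infty^{1-e^{-bt}}$ be the untreated tumor trajectory starting from $x(0)=X_0>0$. Then for any doses $d_0,\dots,d_{N-1}\ge0$ and every $i=0,1,\dots,N-1$, $$Y_i^+=\frac{1}{\alpha_T}\ln\big(x(i)\big)-\sum_{k=0}^{i}e^{-b(i-k)}\,\mathrm{BED}_T(d_k).$$ Consequently, minimizing $Y_{N-1}^+$ subject to $\sum_{k=0}^{N-1}\mathrm{BED}_O(d_k)\le c$ is equivalent to maximizing $\sum_{k=0}^{N-1}e^{-b(N-1-k)}\mathrm{BED}_T(d_k)$ subject to the same constraint.
   Context: Tumor parameters $\alpha_T>0$, $\beta_T>0$, $[\alpha/\beta]_T=\alpha_T/\beta_T$; $\mathrm{BED}_T(d)=d\left(1+\frac{d}{[\alpha/\beta]_T}\right)$; OAR parameters $[\alpha/\beta]_O>0$, $0<\gamma<1$, $c>0$, and $\mathrm{BED}_O(d)=\gamma d\left(1+\frac{\gamma d}{[\alpha/\beta]_O}\right)$. Tumor growth between doses follows $\frac{1}{x}\frac{dx}{dt}=\phi(x)$. Doses are delivered at integer times $0,\dots,N-1$. With $Y=\ln(\text{number of tumor cells})/\alpha_T$, let $F$ be the one-day growth map for $Y$ under the ODE; $Y_0^-=\ln(X_0)/\alpha_T$, $Y_0^+=Y_0^--\mathrm{BED}_T(d_0)$, and $Y_{i+1}^+=F(Y_i^+)-\mathrm{BED}_T(d_{i+1})$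 for $i=0,\dots,N-2$. *)

theory Defs
  imports "HOL-Analysis.Analysis"
begin

definition BED_T :: "real \<Rightarrow> real \<Rightarrow> real" where
  "BED_T abT d = d * (1 + d / abT)"

definition BED_O :: "real \<Rightarrow> real \<Rightarrow> real \<Rightarrow> real" where
  "BED_O abO gam d = gam * d * (1 + gam * d / abO)"

definition gompertz_phi :: "real \<Rightarrow> real \<Rightarrow> real \<Rightarrow> real" where
  "gompertz_phi b Xinf x = b * ln (Xinf / x)"

definition is_one_day_map :: "(real \<Rightarrow> real) \<Rightarrow> real \<Rightarrow> (real \<Rightarrow> real) \<Rightarrow> bool" where
  "is_one_day_map phi alphaT F \<longleftrightarrow>
     (\<forall>Y. \<exists>z::real \<Rightarrow> real. z 0 = exp (alphaT * Y) \<and>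
        (\<forall>t\<in>{0..1}. z t > 0 \<and> (z has_real_derivative (z t * phi (z t))) (at t within {0..1})) \<and>
        F Y = ln (z 1) / alphaT)"

fun Yplus :: "(real \<Rightarrow> real) \<Rightarrow> real \<Rightarrow> real \<Rightarrow> real \<Rightarrow> (nat \<Rightarrow> real) \<Rightarrow> nat \<Rightarrow> real" where
  "Yplus F alphaT abT X0 d 0 = ln X0 / alphaT - BED_T abT (d 0)"
| "Yplus F alphaT abT X0 d (Suc i) = F (Yplus F alphaT abT X0 d i) - BED_T abT (d (Suc i))"

definition gompertz_traj :: "real \<Rightarrow> real \<Rightarrow> real \<Rightarrow> real \<Rightarrow> real" where
  "gompertz_traj b X0 Xinf t = X0 powr exp (- b * t) * Xinf powr (1 - exp (- b * t))"

definition feasible :: "nat \<Rightarrow> real \<Rightarrow> real \<Rightarrow> real \<Rightarrow> (nat \<Rightarrow> real) \<Rightarrow> bool" where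
  "feasible N abO gam c d \<longleftrightarrow> (\<forall>k<N. d k \<ge> 0) \<and> (\<Sum>k<N. BED_O abO gam (d k)) \<le> c"

end

theory Submission
  imports Defs
begin

lemma Fform:
  assumes a: "alphaT > 0" and "b > 0" "Xinf > 0"
    and F: "is_one_day_map (gompertz_phi b Xinf) alphaT F"
  shows "F Y = exp (-b) * Y + (1 - exp (-b)) * ln Xinf / alphaT"
proof -
  obtain z where z0: "z 0 = exp (alphaT * Y)"
    and zd: "\<forall>t\<in>{0..1}. z t > 0 \<and> (z has_real_derivative (z t * gompertz_phi b Xinf (z t))) (at t within {0..1})"
    and FY: "F Y = ln (z 1) / alphaT"
    using F unfolding is_one_day_map_def by blast
  define g where "g t = (ln (z t) - ln Xinf) * exp (b * t)" for t
  have "\<exists>c. \<forall>x\<in>{0..1::real}. g x = c"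
  proof (rule has_field_derivative_zero_constant)
    fix t :: real assume t: "t \<in> {0..1}"
    have zp: "z t > 0" and d: "(z has_real_derivative (z t * gompertz_phi b Xinf (z t))) (at t within {0..1})"
      using zd t by auto
    have "(g has_real_derivative
        ((z t * gompertz_phi b Xinf (z t)) / z t) * exp (b*t) + (ln (z t) - ln Xinf) * (exp (b*t) * b)) (at t within {0..1})"
      unfolding g_def
      by (rule derivative_eq_intros DERIV_ln_divide d zp refl | simp)+
    moreover have "((z t * gompertz_phi b Xinf (z t)) / z t) * exp (b*t) + (ln (z t) - ln Xinf) * (exp (b*t) * b) = 0"
      using zp \<open>Xinf > 0\<close> by (simp add: gompertz_phi_def ln_div field_simps)
    ultimately show "(g has_real_derivative 0) (at t within {0..1})" by simp
  qed simp
  then have "g 1 = g 0" by auto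
  then have "(ln (z 1) - ln Xinf) * exp b = alphaT * Y - ln Xinf"
    by (simp add: g_def z0)
  then have "ln (z 1) = ln Xinf + (alphaT * Y - ln Xinf) * exp (-b)"
    by (simp add: exp_minus field_simps)
  then show ?thesis using FY a by (simp add: field_simps)
qed

lemma alg: "(a::real) > 0 \<Longrightarrow> Y = A / a - S \<Longrightarrow> A = e * l0 + (1 - e) * L \<Longrightarrow>
   E * Y + (1 - E) * L / a - B = (E * e * l0 + (1 - E * e) * L) / a - (E * S + B)"
  by (hypsubst, simp add: field_simps)

theorem mainTheorem6:
  fixes alphaT betaT abT abO gam c b Xinf X0 :: real and N :: nat
    and F :: "real \<Rightarrow> real"
  assumes "alphaT > 0" "betaT > 0" "abT = alphaT / betaT"
    and "abO > 0" "0 < gam" "gam < 1" "c > 0"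
    and "N \<ge> 1" and "b > 0" "Xinf > 0" "X0 > 0"
    and "is_one_day_map (gompertz_phi b Xinf) alphaT F"
  shows "(\<forall>d::nat \<Rightarrow> real. (\<forall>k<N. d k \<ge> 0) \<longrightarrow> (\<forall>i<N.
            Yplus F alphaT abT X0 d i =
              ln (gompertz_traj b X0 Xinf (real i)) / alphaT
              - (\<Sum>k\<le>i. exp (- b * (real i - real k)) * BED_T abT (d k))))
       \<and> (\<forall>d::nat \<Rightarrow> real. feasible N abO gam c d \<longrightarrow>
            ((\<forall>d'. feasible N abO gam c d' \<longrightarrow>
                 Yplus F alphaT abT X0 d (N - 1) \<le> Yplus F alphaT abT X0 d' (N - 1))
             \<longleftrightarrow>
             (\<forall>d'. feasible N abO gam c d' \<longrightarrow>
                 (\<Sum>k<N. exp (- b * (real (N - 1) - real k)) * BED_T abT (d' k))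
                 \<le> (\<Sum>k<N. exp (- b * (real (N - 1) - real k)) * BED_T abT (d k)))))"
  
proof -
  let ?E = "exp (-b)"
  let ?L = "ln Xinf"
  have Fe: "\<And>Y. F Y = ?E * Y + (1 - ?E) * ?L / alphaT"
    using Fform assms(1,9,10,12) by blast
  have lt: "ln (gompertz_traj b X0 Xinf (real i)) = exp (-b * real i) * ln X0 + (1 - exp (-b * real i)) * ?L" for i
    using assms(10,11) by (simp add: gompertz_traj_def ln_mult ln_powr)
  have form: "Yplus F alphaT abT X0 d i =
              ln (gompertz_traj b X0 Xinf (real i)) / alphaT
              - (\<Sum>k\<le>i. exp (- b * (real i - real k)) * BED_T abT (d k))" for d i
  proof (induction i)
    case 0
    then show ?case using lt[of 0] by simp
  next
    case (Suc i)
    have e: "exp (- b * (real (Suc i) - real k)) = ?E * exp (- b * (real i - real k))" for k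
      by (simp add: mult_exp_exp algebra_simps)
    have e2: "exp (-b * real (Suc i)) = ?E * exp (-b * real i)"
      by (simp add: mult_exp_exp algebra_simps)
    have h3: "(\<Sum>k\<le>Suc i. exp (- b * (real (Suc i) - real k)) * BED_T abT (d k))
        = ?E * (\<Sum>k\<le>i. exp (- b * (real i - real k)) * BED_T abT (d k)) + BED_T abT (d (Suc i))"
      unfolding sum.atMost_Suc e by (simp add: sum_distrib_left mult.assoc exp_minus)
    have h1: "Yplus F alphaT abT X0 d (Suc i) = ?E * Yplus F alphaT abT X0 d i + (1 - ?E) * ?L / alphaT - BED_T abT (d (Suc i))"
      by (simp only: Yplus.simps Fe)
    have h2: "ln (gompertz_traj b X0 Xinf (real (Suc i))) = ?E * exp (-b * real i) * ln X0 + (1 - ?E * exp (-b * real i)) * ?L"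
      using lt[of "Suc i"] e2 by simp
    show ?case unfolding h1 h2 h3 by (rule alg[OF assms(1) Suc.IH lt[of i]])
  qed
  have key: "Yplus F alphaT abT X0 d (N - 1) = ln (gompertz_traj b X0 Xinf (real (N - 1))) / alphaT
       - (\<Sum>k<N. exp (- b * (real (N - 1) - real k)) * BED_T abT (d k))" for d
  proof -
    have "{..N - 1} = {..<N}" using assms(8) by auto
    then show ?thesis using form[of d "N - 1"] by simp
  qed
  show ?thesis using form key by auto
qed

end
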